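(* Let $0<s<\tfrac12$ and $\gamma_1(s)=\frac{1}{2}\left(\frac{2^{1-2s}-1}{1-2^{-2s}}\right)$. For every $h\in\mathcal{H}$: (a) $\operatorname{Var}|h|^2=\tfrac{1}{12}|I(h)|^2$; (b) $\mathcal{Q}^\delta_s(h)=\gamma_1(s)\,|I(h)|^{2s}$.
   Context: Let $\mathbb{R}^+=(0,\infty)$. Dyadic intervals. $\mathcal{D}$ is the family of dyadic intervals $I^j_k=(k2^{-j},(k+1)2^{-j}]$ with $j\in\mathbb{Z}$ and $k$ a nonnegative integer. Dyadic distance. $\delta(x,y)=\inf\{|I|:I\in\mathcal{D},\ x,y\in I\}$ for $x,y\in\mathbb{R}^+$. Haar system. $\mathcal{H}$ consists of the functions $h_I(x)=2^{j/2}h(2^jx-k)$ for $I=I^j_k\in\mathcal{D}$, where $h=\chi_{(0,1/2]}-\chi_{(1/2,1]}$. For $h=h_I$ write $I(h)=I$. Variance. For $f\ge0$ on $\mathbb{R}$, $\operatorname{Var}f=\inf_{a\in\mathbb{R}}\int_{\mathbb{R}}(x-a)^2f(x)\,dx$. Here $|h|^2$ is extended by zero outside $\mathbb{R}^+$. Position form. $\mathcal{Q}^\delta_s(\varphi)=\iint_{(\mathbb{R}^+)^2}\delta(x,y)^{2s}\varphi(x)\overline{\varphi(y)}\,\frac{dx\,dy}{\delta(x,y)}$. *)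

theory Defs
  imports "HOL-Analysis.Analysis"
begin

definition dyadic_interval :: "int \<Rightarrow> nat \<Rightarrow> real set" where
  "dyadic_interval j k = {real k * 2 powr (- real_of_int j) <.. (real k + 1) * 2 powr (- real_of_int j)}"

definition dyadic_intervals :: "real set set" where
  "dyadic_intervals = {dyadic_interval j k | j k. True}"

definition ilen :: "real set \<Rightarrow> real" where
  "ilen I = measure lborel I"

definition dyadic_dist :: "real \<Rightarrow> real \<Rightarrow> real" where
  "dyadic_dist x y = Inf {ilen I | I. I \<in> dyadic_intervals \<and> x \<in> I \<and> y \<in> I}"

definition haar_mother :: "real \<Rightarrow> real" where
  "haar_mother t = indicator {0<..1/2} t - indicator {1/2<..1} t"

definition haar :: "int \<Rightarrow> nat \<Rightarrow> real \<Rightarrow> real" where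
  "haar j k x = 2 powr (real_of_int j / 2) * haar_mother (2 powr real_of_int j * x - real k)"

definition Var :: "(real \<Rightarrow> real) \<Rightarrow> real" where
  "Var f = (INF a\<in>(UNIV::real set). integral\<^sup>L lborel (\<lambda>x. (x - a)\<^sup>2 * f x))"

text \<open>Position form Q^delta_s (for real-valued phi; conjugation is trivial).\<close>
definition Qdelta :: "real \<Rightarrow> (real \<Rightarrow> real) \<Rightarrow> real" where
  "Qdelta s \<phi> = integral\<^sup>L (lborel \<Otimes>\<^sub>M lborel)
     (\<lambda>(x, y). indicator ({0<..} \<times> {0<..}) (x, y) *
        (dyadic_dist x y powr (2 * s) * \<phi> x * \<phi> y / dyadic_dist x y))"

definition gamma1 :: "real \<Rightarrow> real" where
  "gamma1 s = 1/2 * ((2 powr (1 - 2 * s) - 1) / (1 - 2 powr (- 2 * s)))"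

end

theory Submission
  imports Defs
begin
definition CC :: "int \<Rightarrow> real \<Rightarrow> int" where
  "CC a x = \<lceil>x * 2 powr real_of_int a\<rceil>"

lemma ceil_ceil_div:
  fixes t :: real and N :: int assumes "N > 0"
  shows "\<lceil>real_of_int \<lceil>t\<rceil> / real_of_int N\<rceil> = \<lceil>t / real_of_int N\<rceil>"
proof -
  have "\<lceil>t / real_of_int N\<rceil> = - \<lfloor>(-t) / real_of_int N\<rfloor>"
    by (simp add: ceiling_def)
  also have "\<dots> = - (\<lfloor>-t\<rfloor> div N)" using assms floor_divide_real_eq_div[of N "-t"] by simp
  also have "\<lceil>real_of_int \<lceil>t\<rceil> / real_of_int N\<rceil> = - ((- \<lceil>t\<rceil>) div N)"
    by (rule ceiling_divide_eq_div)
  ultimately show ?thesis by (simp add: ceiling_def)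
qed

lemma CC_nest:
  assumes "a \<le> b"
  shows "CC a x = \<lceil>real_of_int (CC b x) / 2 ^ nat (b - a)\<rceil>"
proof -
  have N: "(2::real) ^ nat (b - a) = real_of_int ((2::int) ^ nat (b - a))" by simp
  have "x * 2 powr real_of_int a = x * 2 powr real_of_int b / 2 ^ nat (b - a)"
    using assms by (simp add: powr_realpow[symmetric] powr_diff[symmetric] divide_simps powr_add[symmetric])
  then show ?thesis unfolding CC_def N
    by (subst ceil_ceil_div) auto
qed

lemma CC_mono_eq:
  assumes "a \<le> b" "CC b x = CC b y" shows "CC a x = CC a y"
  using CC_nest[OF assms(1), of x] CC_nest[OF assms(1), of y] assms(2) by simp

lemma mem_dyadic: "x \<in> dyadic_interval j k \<longleftrightarrow> CC j x = int k + 1"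
proof -
  have p: "(2::real) powr real_of_int j > 0" by simp
  have "x \<in> dyadic_interval j k \<longleftrightarrow> real k < x * 2 powr real_of_int j \<and> x * 2 powr real_of_int j \<le> real k + 1"
    unfolding dyadic_interval_def using p
    by (simp add: powr_minus divide_simps mult.commute)
  also have "\<dots> \<longleftrightarrow> CC j x = int k + 1"
    unfolding CC_def by (simp add: ceiling_eq_iff)
  finally show ?thesis .
qed

lemma ilen_dyadic: "ilen (dyadic_interval j k) = 2 powr (- real_of_int j)"
  unfolding ilen_def dyadic_interval_def by (simp add: algebra_simps)


lemma CC_pos: assumes "x > 0" shows "CC a x \<ge> 1"
proof -
  have "x * 2 powr real_of_int a > 0" using assms by simp
  then have "CC a x > 0" unfolding CC_def by (meson ceiling_less_zero le_less_trans less_le_not_le linorder_not_le of_int_0_less_iff zero_less_ceiling)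
  then show ?thesis by simp
qed

lemma CC_pos_iff: "CC a x = int k + 1 \<Longrightarrow> x > 0"
  using mem_dyadic[of x a k] unfolding dyadic_interval_def
  by (smt (verit, ccfv_SIG) greaterThanAtMost_iff mult_nonneg_nonneg of_nat_0_le_iff powr_ge_zero)

definition dset :: "real \<Rightarrow> real \<Rightarrow> real set" where
  "dset x y = {ilen I | I. I \<in> dyadic_intervals \<and> x \<in> I \<and> y \<in> I}"

lemma dset_ge0: "z \<in> dset x y \<Longrightarrow> z \<ge> 0"
  unfolding dset_def ilen_def by auto

lemma dset_mem: assumes "x > 0" "CC a x = CC a y" shows "2 powr (- real_of_int a) \<in> dset x y"
proof -
  define c where "c = CC a x"
  have c: "c \<ge> 1" using CC_pos[OF assms(1)] c_def by simp
  have "x \<in> dyadic_interval a (nat (c - 1))" "y \<in> dyadic_interval a (nat (c - 1))"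
    using c assms by (auto simp: mem_dyadic c_def)
  then show ?thesis unfolding dset_def dyadic_intervals_def
    by (auto simp: ilen_dyadic intro!: exI[of _ "dyadic_interval a (nat (c - 1))"])
qed

lemma dd_le: assumes "x > 0" "CC a x = CC a y" shows "dyadic_dist x y \<le> 2 powr (- real_of_int a)"
  unfolding dyadic_dist_def dset_def[symmetric]
  by (rule cInf_lower[OF dset_mem[OF assms]]) (auto intro!: bdd_belowI dset_ge0)

lemma dd_eq: assumes "x > 0" "CC a x = CC a y" "CC (a+1) x \<noteq> CC (a+1) y"
  shows "dyadic_dist x y = 2 powr (- real_of_int a)"
  unfolding dyadic_dist_def dset_def[symmetric]
proof (rule cInf_eq_minimum[OF dset_mem[OF assms(1,2)]])
  fix z assume "z \<in> dset x y"
  then obtain j' k' where z: "z = ilen (dyadic_interval j' k')" "x \<in> dyadic_interval j' k'" "y \<in> dyadic_interval j' k'"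
    unfolding dset_def dyadic_intervals_def by auto
  have "CC j' x = CC j' y" using z by (simp add: mem_dyadic)
  then have "j' \<le> a" using CC_mono_eq[of "a+1" j' x y] assms(3) by (cases "j' \<le> a") auto
  then show "2 powr (- real_of_int a) \<le> z" using z by (simp add: ilen_dyadic)
qed

lemma dd_diag: assumes "x > 0" shows "dyadic_dist x x = 0"
proof -
  have ne: "dset x x \<noteq> {}" using dset_mem[OF assms, of 0 x] by auto
  have ge: "dyadic_dist x x \<ge> 0" unfolding dyadic_dist_def dset_def[symmetric]
    by (intro cInf_greatest[OF ne]) (rule dset_ge0)
  have le: "dyadic_dist x x \<le> (1/2) ^ n" for n :: nat
    using dd_le[OF assms, of "int n" x] by (simp add: powr_minus powr_realpow power_one_over inverse_eq_divide)
  show ?thesis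
  proof (rule ccontr)
    assume "dyadic_dist x x \<noteq> 0"
    then have "dyadic_dist x x > 0" using ge by simp
    then obtain n where "(1/2::real) ^ n < dyadic_dist x x" using real_arch_pow_inv[of "dyadic_dist x x" "1/2"] by auto
    then show False using le[of n] by simp
  qed
qed

definition hh :: "int \<Rightarrow> nat \<Rightarrow> real \<Rightarrow> real" where
  "hh j k x = (if CC (j+1) x = 2 * int k + 1 then 2 powr (real_of_int j / 2)
     else if CC (j+1) x = 2 * int k + 2 then - (2 powr (real_of_int j / 2)) else 0)"

lemma haar_hh: "haar j k x = hh j k x"
proof -
  have p: "(2::real) powr real_of_int (j+1) = 2 * 2 powr real_of_int j" by (simp add: powr_add)
  have e1: "(2 powr real_of_int j * x - real k \<in> {0<..1/2}) \<longleftrightarrow> CC (j+1) x = 2 * int k + 1"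
    unfolding CC_def p by (simp add: ceiling_eq_iff algebra_simps)
  have e2: "(2 powr real_of_int j * x - real k \<in> {1/2<..1}) \<longleftrightarrow> CC (j+1) x = 2 * int k + 2"
    unfolding CC_def p by (simp add: ceiling_eq_iff algebra_simps) linarith
  show ?thesis unfolding haar_def hh_def haar_mother_def
    using e1 e2 by (auto simp: indicator_def)
qed

lemma CC_half: "CC j x = int k + 1 \<longleftrightarrow> CC (j+1) x = 2 * int k + 1 \<or> CC (j+1) x = 2 * int k + 2"
proof -
  have "CC j x = \<lceil>real_of_int (CC (j+1) x) / 2\<rceil>" using CC_nest[of j "j+1" x] by simp
  then show ?thesis by (auto simp: ceiling_eq_iff)
qed

lemma int_sq: fixes p q a :: real assumes "p \<le> q"
  shows "integral\<^sup>L lborel (\<lambda>x. indicator {p<..q} x * (x - a)\<^sup>2) = ((q - a)^3 - (p - a)^3) / 3"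
proof -
  have "integral\<^sup>L lborel (\<lambda>x. indicator {p<..q} x * (x - a)\<^sup>2) =
        integral\<^sup>L lborel (\<lambda>x. indicator {p..q} x *\<^sub>R (x - a)\<^sup>2)"
  proof (rule integral_cong_AE)
    show "AE x in lborel. indicator {p<..q} x * (x - a)\<^sup>2 = indicator {p..q} x *\<^sub>R (x - a)\<^sup>2"
      using AE_lborel_singleton[of p] by eventually_elim (auto simp: indicator_def)
  qed auto
  also have "\<dots> = (q - a)^3 / 3 - (p - a)^3 / 3"
    by (rule integral_FTC_atLeastAtMost[OF assms])
       (auto intro!: derivative_eq_intros continuous_intros simp flip: has_real_derivative_iff_has_vector_derivative simp: power2_eq_square)
  finally show ?thesis by (simp add: diff_divide_distrib)
qed

lemma hh_sq: "(hh j k x)\<^sup>2 = 2 powr real_of_int j * indicator (dyadic_interval j k) x"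
proof -
  have "(2 powr (real_of_int j / 2))\<^sup>2 = 2 powr real_of_int j"
    by (simp add: powr_realpow[symmetric] powr_powr)
  then show ?thesis unfolding hh_def using CC_half[of j x k] by (auto simp: indicator_def mem_dyadic)
qed

lemma partA: "Var (\<lambda>x. \<bar>haar j k x\<bar>\<^sup>2) = 1/12 * (ilen (dyadic_interval j k))\<^sup>2"
proof -
  define l where "l = (2::real) powr (- real_of_int j)"
  define p where "p = real k * l"
  have l0: "l > 0" unfolding l_def by simp
  have lj: "2 powr real_of_int j * l = 1" unfolding l_def by (simp add: powr_minus)
  have I: "dyadic_interval j k = {p<..p+l}" unfolding dyadic_interval_def p_def l_def by (simp add: algebra_simps)
  have val: "integral\<^sup>L lborel (\<lambda>x. (x - a)\<^sup>2 * \<bar>haar j k x\<bar>\<^sup>2) = (a - (p + l/2))\<^sup>2 + l\<^sup>2/12" for a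
  proof -
    have "integral\<^sup>L lborel (\<lambda>x. (x - a)\<^sup>2 * \<bar>haar j k x\<bar>\<^sup>2) =
      integral\<^sup>L lborel (\<lambda>x. 2 powr real_of_int j * (indicator {p<..p+l} x * (x - a)\<^sup>2))"
      by (rule Bochner_Integration.integral_cong) (auto simp: haar_hh hh_sq I)
    also have "\<dots> = 2 powr real_of_int j * (((p + l - a)^3 - (p - a)^3) / 3)"
      using int_sq[of p "p+l" a] l0 by simp
    also have "\<dots> = 2 powr real_of_int j * l * ((a - (p + l/2))\<^sup>2 + l\<^sup>2/12)"
    proof -
      have "((p + l - a)^3 - (p - a)^3) / 3 = l * ((a - (p + l/2))\<^sup>2 + l\<^sup>2/12)"
        by (simp add: field_simps power2_eq_square power3_eq_cube)
      then show ?thesis by simp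
    qed
    finally show ?thesis using lj by simp
  qed
  have "Var (\<lambda>x. \<bar>haar j k x\<bar>\<^sup>2) = (INF a\<in>UNIV. (a - (p + l/2))\<^sup>2 + l\<^sup>2/12)"
    unfolding Var_def val by simp
  also have "\<dots> = l\<^sup>2/12"
    by (rule cInf_eq_minimum) auto
  finally show ?thesis by (simp add: ilen_dyadic l_def)
qed

definition ED :: "int \<Rightarrow> nat \<Rightarrow> nat \<Rightarrow> (real \<times> real) set" where
  "ED j k n = {p. CC j (fst p) = int k + 1 \<and> CC j (snd p) = int k + 1 \<and> CC (j + int n) (fst p) = CC (j + int n) (snd p)}"

definition DD :: "int \<Rightarrow> nat \<Rightarrow> nat \<Rightarrow> (real \<times> real) set" where
  "DD j k n = ED j k n - ED j k (Suc n)"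


lemma CC_meas[measurable]: "CC a \<in> borel \<rightarrow>\<^sub>M count_space UNIV"
proof -
  have "(\<lambda>x::real. x * 2 powr real_of_int a) \<in> borel \<rightarrow>\<^sub>M borel" by simp
  from measurable_compose[OF this measurable_real_ceiling] show ?thesis
    unfolding CC_def[abs_def] .
qed

lemma ED_sets[measurable]: "ED j k n \<in> sets lborel"
proof -
  have "ED j k n = {p \<in> space (borel \<Otimes>\<^sub>M borel). CC j (fst p) = int k + 1 \<and> CC j (snd p) = int k + 1 \<and> CC (j + int n) (fst p) = CC (j + int n) (snd p)}"
    unfolding ED_def by (auto simp: space_pair_measure)
  also have "\<dots> \<in> sets (borel \<Otimes>\<^sub>M borel)" by measurable
  finally show ?thesis by (metis borel_prod sets_lborel)
qed

lemma DD_sets[measurable]: "DD j k n \<in> sets lborel"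
  unfolding DD_def by (intro sets.Diff ED_sets)

lemma CC_eq_iff: "CC m y = c \<longleftrightarrow> y \<in> {(real_of_int c - 1) * 2 powr (- real_of_int m) <.. real_of_int c * 2 powr (- real_of_int m)}"
proof -
  have p: "(2::real) powr real_of_int m > 0" by simp
  show ?thesis unfolding CC_def using p
    by (simp add: ceiling_eq_iff powr_minus divide_simps mult.commute)
qed

lemma ED_sub: "ED j k (Suc n) \<subseteq> ED j k n"
proof
  fix p assume "p \<in> ED j k (Suc n)"
  then show "p \<in> ED j k n" unfolding ED_def
    using CC_mono_eq[of "j + int n" "j + int (Suc n)" "fst p" "snd p"] by simp
qed

lemma emeasure_ED: "emeasure lborel (ED j k n) = ennreal (2 powr (- real_of_int (2*j + int n)))"
proof -
  let ?m = "j + int n"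
  have sec: "Pair x -` ED j k n = (if CC j x = int k + 1 then {y. CC ?m y = CC ?m x} else {})" for x
  proof -
    have "CC ?m y = CC ?m x \<Longrightarrow> CC j x = int k + 1 \<Longrightarrow> CC j y = int k + 1" for y
      using CC_mono_eq[of j ?m y x] by simp
    then show ?thesis unfolding ED_def by auto
  qed
  have em: "emeasure lborel {y. CC ?m y = c} = ennreal (2 powr (- real_of_int ?m))" for c
  proof -
    define t where "t = (2::real) powr (- real_of_int ?m)"
    have t0: "t > 0" unfolding t_def by simp
    have "{y. CC ?m y = c} = {(real_of_int c - 1) * t <.. real_of_int c * t}"
      unfolding t_def by (rule set_eqI) (simp only: mem_Collect_eq CC_eq_iff)
    moreover have "emeasure lborel {(real_of_int c - 1) * t <.. real_of_int c * t} = ennreal (real_of_int c * t - (real_of_int c - 1) * t)"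
      by (rule emeasure_lborel_Ioc) (use t0 in \<open>simp add: algebra_simps\<close>)
    moreover have "real_of_int c * t - (real_of_int c - 1) * t = t" by (simp add: algebra_simps)
    ultimately show ?thesis unfolding t_def by simp
  qed
  have "emeasure (lborel :: (real \<times> real) measure) (ED j k n) = emeasure (lborel \<Otimes>\<^sub>M lborel) (ED j k n)"
    by (simp add: lborel_prod)
  also have "\<dots> = (\<integral>\<^sup>+x. emeasure lborel (Pair x -` ED j k n) \<partial>lborel)"
    by (rule lborel.emeasure_pair_measure_alt) (unfold lborel_prod, rule ED_sets)
  also have "\<dots> = (\<integral>\<^sup>+x. ennreal (2 powr (- real_of_int ?m)) * indicator (dyadic_interval j k) x \<partial>lborel)"
    by (rule nn_integral_cong) (simp add: sec em mem_dyadic indicator_def)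
  also have "\<dots> = ennreal (2 powr (- real_of_int ?m)) * emeasure lborel (dyadic_interval j k)"
    by (rule nn_integral_cmult_indicator) (simp add: dyadic_interval_def)
  also have "emeasure lborel (dyadic_interval j k) = ennreal (2 powr (- real_of_int j))"
    by (simp add: dyadic_interval_def algebra_simps)
  also have "ennreal (2 powr (- real_of_int ?m)) * ennreal (2 powr (- real_of_int j)) = ennreal (2 powr (- real_of_int (2*j + int n)))"
    by (simp add: ennreal_mult''[symmetric] powr_add[symmetric])
  finally show ?thesis .
qed

lemma measure_DD: "measure lborel (DD j k n) = 2 powr (- real_of_int (2*j + int n + 1))"
proof -
  have m: "measure lborel (ED j k n) = 2 powr (- real_of_int (2*j + int n))" for n
    using emeasure_ED[of j k n] by (simp add: measure_def)
  have m': "measure lborel (ED j k (Suc n)) = 2 powr (- real_of_int (2*j + int n + 1))"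
  proof -
    have e: "real_of_int (2*j + int (Suc n)) = real_of_int (2*j + int n + 1)" by simp
    show ?thesis using m[of "Suc n"] unfolding e .
  qed
  have "measure lborel (DD j k n) = measure lborel (ED j k n) - measure lborel (ED j k (Suc n))"
    unfolding DD_def by (rule measure_Diff) (auto simp: emeasure_ED ED_sub ED_sets[simplified])
  also have "\<dots> = 2 powr (- real_of_int (2*j + int n)) - 2 powr (- real_of_int (2*j + int n + 1))"
    by (simp only: m' m[of n])
  also have "\<dots> = 2 powr (- real_of_int (2*j + int n + 1))"
    by (simp add: powr_diff powr_add powr_minus field_simps)
  finally show ?thesis .
qed

lemma DD_iff: "(x, y) \<in> DD j k n \<longleftrightarrow> CC j x = int k + 1 \<and> CC j y = int k + 1 \<and>
   CC (j + int n) x = CC (j + int n) y \<and> CC (j + int n + 1) x \<noteq> CC (j + int n + 1) y"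
proof -
  have e: "j + int (Suc n) = j + int n + 1" by simp
  show ?thesis unfolding DD_def ED_def e by auto
qed

lemma DD_disj: assumes "p \<in> DD j k n" "p \<in> DD j k m" shows "n = m"
proof (rule ccontr)
  obtain x y where p: "p = (x, y)" by (cases p)
  assume "n \<noteq> m"
  then consider "n < m" | "m < n" by linarith
  then show False
  proof cases
    case 1
    then show False using assms CC_mono_eq[of "j + int n + 1" "j + int m" x y] unfolding p DD_iff by auto
  next
    case 2
    then show False using assms CC_mono_eq[of "j + int m + 1" "j + int n" x y] unfolding p DD_iff by auto
  qed
qed

lemma CC_sep: assumes "x \<noteq> y" shows "\<exists>m::nat. CC (j + int m) x \<noteq> CC (j + int m) y"
proof (rule ccontr)
  assume "\<not> ?thesis"
  then have eq: "CC (j + int m) x = CC (j + int m) y" for m by auto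
  have lt: "\<bar>x - y\<bar> < 2 powr (- real_of_int j) * (1/2) ^ m" for m
  proof -
    define c where "c = CC (j + int m) x"
    have "x \<in> {(real_of_int c - 1) * 2 powr (- real_of_int (j + int m)) <.. real_of_int c * 2 powr (- real_of_int (j + int m))}"
      "y \<in> {(real_of_int c - 1) * 2 powr (- real_of_int (j + int m)) <.. real_of_int c * 2 powr (- real_of_int (j + int m))}"
      using CC_eq_iff[of "j + int m" x c] CC_eq_iff[of "j + int m" y c] eq[of m] c_def by auto
    then have "\<bar>x - y\<bar> < 2 powr (- real_of_int (j + int m))" by (auto simp: algebra_simps)
    also have "2 powr (- real_of_int (j + int m)) = 2 powr (- real_of_int j) * (1/2) ^ m"
    proof -
      have "2 powr (- real_of_int (j + int m)) = 2 powr (- real_of_int j) * 2 powr (- real m)"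
        by (simp add: powr_add[symmetric])
      moreover have "(2::real) powr (- real m) = (1/2)^m"
        by (simp add: powr_minus powr_realpow power_one_over inverse_eq_divide)
      ultimately show ?thesis by simp
    qed
    finally show ?thesis .
  qed
  have pos: "\<bar>x - y\<bar> / 2 powr (- real_of_int j) > 0" using assms by simp
  obtain m where "(1/2::real) ^ m < \<bar>x - y\<bar> / 2 powr (- real_of_int j)"
    using real_arch_pow_inv[OF pos, of "1/2"] by auto
  then have "2 powr (- real_of_int j) * (1/2) ^ m < \<bar>x - y\<bar>" by (simp add: field_simps)
  then show False using lt[of m] by simp
qed

lemma first_diff: assumes "x \<noteq> y" "CC j x = CC j y"
  shows "\<exists>n::nat. CC (j + int n) x = CC (j + int n) y \<and> CC (j + int n + 1) x \<noteq> CC (j + int n + 1) y"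
proof -
  define m where "m = (LEAST m::nat. CC (j + int m) x \<noteq> CC (j + int m) y)"
  have m1: "CC (j + int m) x \<noteq> CC (j + int m) y"
    unfolding m_def using CC_sep[OF assms(1), of j] by (metis (mono_tags, lifting) LeastI)
  have "m \<noteq> 0"
  proof
    assume "m = 0" then show False using m1 assms(2) by simp
  qed
  then obtain n where n: "m = Suc n" by (cases m) auto
  have "CC (j + int n) x = CC (j + int n) y"
    using not_less_Least[of n "\<lambda>m. CC (j + int m) x \<noteq> CC (j + int m) y"] n unfolding m_def by auto
  moreover have "CC (j + int n + 1) x \<noteq> CC (j + int n + 1) y"
  proof -
    have e: "j + int m = j + int n + 1" using n by simp
    show ?thesis using m1 unfolding e .
  qed
  ultimately show ?thesis by blast
qed

definition dd :: "int \<Rightarrow> nat \<Rightarrow> real" where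
  "dd j n = 2 powr (- real_of_int (j + int n))"

definition cst :: "real \<Rightarrow> int \<Rightarrow> nat \<Rightarrow> real" where
  "cst s j n = dd j n powr (2 * s) * (if n = 0 then - (2 powr real_of_int j) else 2 powr real_of_int j) / dd j n"

lemma hh_in: assumes "CC j x = int k + 1" shows "hh j k x = 2 powr (real_of_int j / 2) \<or> hh j k x = - (2 powr (real_of_int j / 2))"
  using assms CC_half[of j x k] unfolding hh_def by auto

lemma hh_out: assumes "CC j x \<noteq> int k + 1" shows "hh j k x = 0"
  using assms CC_half[of j x k] unfolding hh_def by auto

lemma sq2: "2 powr (real_of_int j / 2) * 2 powr (real_of_int j / 2) = 2 powr real_of_int j"
  by (simp add: powr_add[symmetric])

lemma pointwise:
  "indicator ({0<..} \<times> {0<..}) (x, y) * (dyadic_dist x y powr (2 * s) * haar j k x * haar j k y / dyadic_dist x y)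
    = (\<Sum>n. cst s j n * indicator (DD j k n) (x, y))"
proof (cases "CC j x = int k + 1 \<and> CC j y = int k + 1")
  case False
  then have "haar j k x * haar j k y = 0" using hh_out[of j x k] hh_out[of j y k] by (auto simp: haar_hh)
  moreover have "(x, y) \<notin> DD j k n" for n using False DD_iff by auto
  ultimately show ?thesis by simp
next
  case True
  then have pos: "x > 0" "y > 0" using CC_pos_iff by auto
  show ?thesis
  proof (cases "x = y")
    case True
    then have "(x, y) \<notin> DD j k n" for n using DD_iff by auto
    then show ?thesis using dd_diag[OF pos(1)] True by simp
  next
    case False
    obtain n0 where n0: "CC (j + int n0) x = CC (j + int n0) y" "CC (j + int n0 + 1) x \<noteq> CC (j + int n0 + 1) y"
      using first_diff[OF False, of j] True by auto
    have in0: "(x, y) \<in> DD j k n0" using n0 True DD_iff by auto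
    have "cst s j n * indicator (DD j k n) (x, y) = (if n = n0 then cst s j n else 0)" for n
    proof (cases "n = n0")
      case True then show ?thesis using in0 by simp
    next
      case False
      then have "(x, y) \<notin> DD j k n" using DD_disj[OF in0, of n] by auto
      then show ?thesis using False by simp
    qed
    then have "(\<lambda>n. cst s j n * indicator (DD j k n) (x, y)) = (\<lambda>n. if n = n0 then cst s j n else 0)"
      by (intro ext)
    then have R: "(\<Sum>n. cst s j n * indicator (DD j k n) (x, y)) = cst s j n0"
      using sums_single[of n0 "cst s j"] by (simp add: sums_iff)
    have dist: "dyadic_dist x y = dd j n0" unfolding dd_def by (rule dd_eq[OF pos(1) n0])
    have prod: "haar j k x * haar j k y = (if n0 = 0 then - (2 powr real_of_int j) else 2 powr real_of_int j)"
    proof (cases "n0 = 0")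
      case True
      then have "CC (j + 1) x \<noteq> CC (j + 1) y" using n0 by simp
      moreover have "CC (j+1) x = 2 * int k + 1 \<or> CC (j+1) x = 2 * int k + 2"
        using \<open>CC j x = int k + 1 \<and> CC j y = int k + 1\<close> CC_half[of j x k] by blast
      moreover have "CC (j+1) y = 2 * int k + 1 \<or> CC (j+1) y = 2 * int k + 2"
        using \<open>CC j x = int k + 1 \<and> CC j y = int k + 1\<close> CC_half[of j y k] by blast
      ultimately show ?thesis using True
        by (auto simp: haar_hh hh_def sq2)
    next
      case False
      then have "CC (j + 1) x = CC (j + 1) y" using n0 CC_mono_eq[of "j+1" "j + int n0" x y] by simp
      then have "hh j k x = hh j k y" unfolding hh_def by simp
      then show ?thesis using False hh_in[of j x k] \<open>CC j x = int k + 1 \<and> CC j y = int k + 1\<close>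
        by (auto simp: haar_hh sq2)
    qed
    have L: "indicator ({0<..} \<times> {0<..}) (x, y) * (dyadic_dist x y powr (2 * s) * haar j k x * haar j k y / dyadic_dist x y) = cst s j n0"
      using pos unfolding cst_def dist by (simp add: mult.assoc prod)
    show ?thesis using L R by simp
  qed
qed

lemma cst_measure:
  "cst s j n * measure lborel (DD j k n) = (if n = 0 then - (2 powr (- 2 * s * real_of_int j) / 2) else 2 powr (- 2 * s * real_of_int j) / 2 * (2 powr (- 2 * s)) ^ n)"
proof -
  have a: "dd j n powr (2 * s) / dd j n = 2 powr (- real_of_int (j + int n) * (2 * s - 1))"
    unfolding dd_def by (simp add: powr_powr powr_diff[symmetric] algebra_simps)
  have b: "(2::real) powr (- 2 * s * real_of_int j) / 2 * (2 powr (- 2 * s)) ^ n = 2 powr (- 2 * s * real_of_int j - 2 * s * real n - 1)"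
  proof -
    have "(2::real) powr (- 2 * s * real_of_int j) / 2 * (2 powr (- 2 * s)) ^ n
       = 2 powr (- 2 * s * real_of_int j) * 2 powr (-1) * 2 powr (- 2 * s * real n)"
      by (simp add: powr_realpow[symmetric] powr_powr powr_minus field_simps)
    also have "\<dots> = 2 powr (- 2 * s * real_of_int j + -1 + - 2 * s * real n)"
      by (simp only: powr_add)
    also have "\<dots> = 2 powr (- 2 * s * real_of_int j - 2 * s * real n - 1)"
      by (rule arg_cong[where f="(powr) 2"]) (simp add: algebra_simps)
    finally show ?thesis .
  qed
  have c: "2 powr (- real_of_int (j + int n) * (2 * s - 1)) * 2 powr real_of_int j * 2 powr (- real_of_int (2 * j + int n + 1))
      = (2::real) powr (- 2 * s * real_of_int j - 2 * s * real n - 1)"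
  proof -
    have "2 powr (- real_of_int (j + int n) * (2 * s - 1)) * 2 powr real_of_int j * 2 powr (- real_of_int (2 * j + int n + 1))
      = (2::real) powr (- real_of_int (j + int n) * (2 * s - 1) + real_of_int j + - real_of_int (2 * j + int n + 1))"
      by (simp only: powr_add)
    also have "\<dots> = 2 powr (- 2 * s * real_of_int j - 2 * s * real n - 1)"
      by (rule arg_cong[where f="(powr) 2"]) (simp add: algebra_simps)
    finally show ?thesis .
  qed
  have "cst s j n * measure lborel (DD j k n) = (if n = 0 then -1 else 1) *
     (2 powr (- real_of_int (j + int n) * (2 * s - 1)) * 2 powr real_of_int j * 2 powr (- real_of_int (2 * j + int n + 1)))"
  proof -
    have "cst s j n = (dd j n powr (2 * s) / dd j n) * (if n = 0 then - (2 powr real_of_int j) else 2 powr real_of_int j)"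
      unfolding cst_def by simp
    then show ?thesis unfolding a measure_DD by (cases "n = 0") (simp_all add: algebra_simps)
  qed
  also have "\<dots> = (if n = 0 then -1 else 1) * (2 powr (- 2 * s * real_of_int j) / 2 * (2 powr (- 2 * s)) ^ n)"
    unfolding c b ..
  finally show ?thesis by (cases "n = 0") simp_all
qed

lemma partB: assumes "0 < s"
  shows "Qdelta s (haar j k) = gamma1 s * ilen (dyadic_interval j k) powr (2 * s)"
proof -
  have fin: "emeasure lborel (DD j k n) < top" for n
  proof -
    have "emeasure lborel (DD j k n) \<le> emeasure lborel (ED j k n)"
      by (rule emeasure_mono[OF _ ED_sets]) (auto simp: DD_def)
    also have "\<dots> < top" by (simp add: emeasure_ED)
    finally show ?thesis .
  qed
  have Ds: "DD j k n \<in> sets borel" for n using DD_sets by simp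
  define f where "f n p = cst s j n * indicator (DD j k n) p" for n p
  define A where "A = (2::real) powr (- 2 * s * real_of_int j) / 2"
  define r where "r = (2::real) powr (- 2 * s)"
  have r0: "0 < r" "r < 1" unfolding r_def using assms powr_less_mono[of "- 2 * s" 0 2] by auto
  have fm: "integral\<^sup>L lborel (f n) = (if n = 0 then - A else A * r ^ n)" for n
    unfolding f_def A_def r_def using cst_measure[of s j n k]
    by (simp add: fin Ds)
  have int: "integrable lborel (f n)" for n
    unfolding f_def by (intro integrable_mult_right integrable_real_indicator) (auto simp: fin Ds)
  have nf: "integral\<^sup>L lborel (\<lambda>p. norm (f n p)) = A * r ^ n" for n
  proof -
    have "(\<lambda>p. norm (f n p)) = (\<lambda>p. \<bar>cst s j n\<bar> * indicator (DD j k n) p)"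
      unfolding f_def by (auto simp: indicator_def abs_mult)
    then have "integral\<^sup>L lborel (\<lambda>p. norm (f n p)) = \<bar>cst s j n\<bar> * measure lborel (DD j k n)"
      by (simp add: fin Ds)
    also have "\<dots> = \<bar>cst s j n * measure lborel (DD j k n)\<bar>" by (simp add: abs_mult)
    also have "\<dots> = A * r ^ n" unfolding cst_measure A_def r_def by simp
    finally show ?thesis .
  qed
  have summ: "summable (\<lambda>n. norm (f n p))" for p
  proof (cases "\<exists>n0. p \<in> DD j k n0")
    case True
    then obtain n0 where n0: "p \<in> DD j k n0" by auto
    show ?thesis
      by (rule summable_finite[of "{n0}"]) (use DD_disj[OF n0] in \<open>auto simp: f_def indicator_def\<close>)
  next
    case False
    then show ?thesis by (simp add: f_def)
  qed
  have sn: "summable (\<lambda>n. integral\<^sup>L lborel (\<lambda>p. norm (f n p)))"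
    unfolding nf using r0 by (intro summable_mult summable_geometric) auto
  have "Qdelta s (haar j k) = integral\<^sup>L lborel (\<lambda>p. \<Sum>n. f n p)"
  proof -
    have "(\<lambda>(x, y). indicator ({0<..} \<times> {0<..}) (x, y) *
        (dyadic_dist x y powr (2 * s) * haar j k x * haar j k y / dyadic_dist x y)) = (\<lambda>p. \<Sum>n. f n p)"
    proof (rule ext)
      fix p :: "real \<times> real"
      obtain x y where p: "p = (x, y)" by (cases p)
      show "(case p of (x, y) \<Rightarrow> indicator ({0<..} \<times> {0<..}) (x, y) *
        (dyadic_dist x y powr (2 * s) * haar j k x * haar j k y / dyadic_dist x y)) = (\<Sum>n. f n p)"
        unfolding p f_def using pointwise[of x y s j k] by simp
    qed
    then show ?thesis unfolding Qdelta_def lborel_prod by simp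
  qed
  also have "\<dots> = (\<Sum>n. integral\<^sup>L lborel (f n))"
    by (rule integral_suminf[OF int]) (use summ sn in auto)
  also have "\<dots> = (\<Sum>n. A * r ^ n - (if n = 0 then 2 * A else 0))"
    unfolding fm by (rule arg_cong[where f=suminf]) auto
  also have "\<dots> = A / (1 - r) - 2 * A"
  proof -
    have s1: "(\<lambda>n. A * r ^ n) sums (A / (1 - r))"
      using sums_mult[OF geometric_sums[of r], of A] r0 by (simp add: field_simps)
    have s2: "(\<lambda>n. if n = 0 then 2 * A else 0) sums (2 * A)"
      using sums_single[of 0 "\<lambda>_. 2 * A"] by simp
    show ?thesis using sums_diff[OF s1 s2] by (simp add: sums_iff)
  qed
  also have "\<dots> = gamma1 s * ilen (dyadic_interval j k) powr (2 * s)"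
  proof -
    have l: "ilen (dyadic_interval j k) powr (2 * s) = 2 * A"
      unfolding ilen_dyadic A_def by (simp add: powr_powr algebra_simps)
    have g: "gamma1 s = 1/2 * ((2 * r - 1) / (1 - r))"
      unfolding gamma1_def r_def by (simp add: powr_diff powr_minus field_simps)
    show ?thesis unfolding l g using r0 by (simp add: field_simps)
  qed
  finally show ?thesis .
qed

theorem lemma2p3:
  fixes s :: real and j :: int and k :: nat
  assumes "0 < s" and "s < 1/2"
  shows "Var (\<lambda>x. \<bar>haar j k x\<bar>\<^sup>2) = 1/12 * (ilen (dyadic_interval j k))\<^sup>2 \<and>
         Qdelta s (haar j k) = gamma1 s * ilen (dyadic_interval j k) powr (2 * s)"
  using partA partB[OF assms(1)] by blast

end
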